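(* Let $\varphi:\mathbb{T}^1\times I_0\to\mathbb{T}^1\times I_0$, $\varphi(\theta,x)=(g(\theta),f(\theta,x))$, be a $C^3$ partially hyperbolic skew-product with $g$ a uniformly expanding smooth circle map. Let $\alpha>0$ and let $C_1=C_1(\alpha)>0$ be a constant such that for every $\alpha$-curve $\widehat X$ and every $n$, $\varphi^n(\widehat X)$ is a $C_1$-curve whenever it is a graph. Then there exists $C_2=C_2(\alpha)>0$ such that if $\widehat X=\{(\theta,X(\theta)):\theta\in J\}$ and $\varphi^k(\widehat X)=\{(\theta,X_k(\theta)):\theta\in J_k\}$ are graphs with $|X'|,|X_k'|\le C_1$, then for all $z,w\in\varphi^k(\widehat X)$, $$\operatorname{dist}_{\widehat X}(\varphi^{-k}(z),\varphi^{-k}(w))\le C_2\,|\partial_\theta g^k(\theta_k)|^{-1}\operatorname{dist}_{\varphi^k(\widehat X)}(z,w)$$ for some $\theta_k\in J$.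
   Context: Partial hyperbolicity: there exist $C>0$, $0<\sigma<1$ with $\prod_{i=0}^{n-1}|\partial_x f(\varphi^i(\theta,x))|\,/\,|\partial_\theta g^n(\theta)|\le C\sigma^n$ for all $(\theta,x)$ and $n$. For $t>0$, a $t$-curve is the graph of a $C^1$ map $X:J\to I_0$, $J\subset\mathbb{T}^1$ an interval, with $|X'|\le t$. $\operatorname{dist}_A$ denotes the distance along the curve $A$ (arc length with respect to the Euclidean metric), and $\varphi^{-k}(z)$ denotes the point of $\widehat X$ mapped by $\varphi^k$ to $z$. *)

theory Defs
  imports "HOL-Analysis.Analysis"
begin

text \<open>The circle T^1 is represented by its universal cover: points of
T^1 x I0 are lifted to R x I0. The base map g is given by a lift G : R -> R of
integer degree, and the fibre map f by a function on R^2 which is 1-periodic in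
theta.\<close>

fun Ck :: "nat \<Rightarrow> (real \<times> real \<Rightarrow> real) \<Rightarrow> bool" where
  "Ck 0 f = continuous_on UNIV f"
| "Ck (Suc k) f = (\<exists>f1 f2. (\<forall>z. (f has_derivative (\<lambda>h. fst h * f1 z + snd h * f2 z)) (at z))
                      \<and> Ck k f1 \<and> Ck k f2)"

definition smooth_real :: "(real \<Rightarrow> real) \<Rightarrow> bool" where
  "smooth_real G = (\<forall>n x. ((deriv ^^ n) G) differentiable (at x))"

definition expanding_circle_lift :: "(real \<Rightarrow> real) \<Rightarrow> bool" where
  "expanding_circle_lift G = (smooth_real G \<and> (\<exists>d::int. \<forall>t. G (t + 1) = G t + of_int d)
                              \<and> (\<exists>lam>1. \<forall>t. \<bar>deriv G t\<bar> \<ge> lam))"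

definition skew :: "(real \<Rightarrow> real) \<Rightarrow> (real \<times> real \<Rightarrow> real) \<Rightarrow> real \<times> real \<Rightarrow> real \<times> real" where
  "skew G f = (\<lambda>p. (G (fst p), f p))"

definition partially_hyperbolic ::
  "(real \<Rightarrow> real) \<Rightarrow> (real \<times> real \<Rightarrow> real) \<Rightarrow> real set \<Rightarrow> bool" where
  "partially_hyperbolic G f I0 =
    (\<exists>C>0. \<exists>\<sigma>. 0 < \<sigma> \<and> \<sigma> < 1 \<and>
      (\<forall>t x n. x \<in> I0 \<longrightarrow>
        (\<Prod>i<n. \<bar>deriv (\<lambda>y. f (fst ((skew G f ^^ i) (t, x)), y)) (snd ((skew G f ^^ i) (t, x)))\<bar>)
          / \<bar>deriv (G ^^ n) t\<bar> \<le> C * \<sigma> ^ n))"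

text \<open>A lifted interval J projects injectively into the circle.\<close>
definition circle_injective :: "real set \<Rightarrow> bool" where
  "circle_injective J = (\<forall>a\<in>J. \<forall>b\<in>J. a - b \<in> \<int> \<longrightarrow> a = b)"

definition tcurve :: "real set \<Rightarrow> real \<Rightarrow> real set \<Rightarrow> (real \<Rightarrow> real) \<Rightarrow> bool" where
  "tcurve I0 t J X =
    (is_interval J \<and> J \<noteq> {} \<and> circle_injective J \<and> (\<forall>s\<in>J. X s \<in> I0) \<and>
     (\<exists>X'. (\<forall>s\<in>J. (X has_real_derivative X' s) (at s within J)) \<and> continuous_on J X'
           \<and> (\<forall>s\<in>J. \<bar>X' s\<bar> \<le> t)))"

text \<open>phi^n of the graph of X over J is a graph over the circle.\<close>
definition image_is_graph :: "(real \<Rightarrow> real) \<Rightarrow> nat \<Rightarrow> real set \<Rightarrow> bool" where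
  "image_is_graph G n J = circle_injective ((G ^^ n) ` J)"

definition represents_image ::
  "(real \<Rightarrow> real) \<Rightarrow> (real \<times> real \<Rightarrow> real) \<Rightarrow> nat \<Rightarrow> real set \<Rightarrow> (real \<Rightarrow> real) \<Rightarrow> (real \<Rightarrow> real) \<Rightarrow> bool" where
  "represents_image G f n J X Y = (\<forall>s\<in>J. Y ((G ^^ n) s) = snd ((skew G f ^^ n) (s, X s)))"

definition graph_dist :: "(real \<Rightarrow> real) \<Rightarrow> real \<Rightarrow> real \<Rightarrow> real" where
  "graph_dist X a b = integral {min a b..max a b} (\<lambda>s. sqrt (1 + (deriv X s)\<^sup>2))"

end

theory Submission
  imports Defs
begin

lemma gd_bounds:
  assumes tc: "tcurve I0 t J X" and a: "a \<in> J" and b: "b \<in> J"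
  shows "\<bar>a - b\<bar> \<le> graph_dist X a b \<and> graph_dist X a b \<le> sqrt (1 + t^2) * \<bar>a - b\<bar>"
proof -
  define c where "c = min a b"
  define d where "d = max a b"
  from tc obtain X' where iv: "is_interval J" and
    der: "\<forall>s\<in>J. (X has_real_derivative X' s) (at s within J)" and
    cont: "continuous_on J X'" and bd: "\<forall>s\<in>J. \<bar>X' s\<bar> \<le> t"
    unfolding tcurve_def by blast
  have cJ: "c \<in> J" using a b unfolding c_def min_def by simp
  have dJ: "d \<in> J" using a b unfolding d_def max_def by simp
  have cdJ: "{c..d} \<subseteq> J"
  proof
    fix x assume x: "x \<in> {c..d}"
    show "x \<in> J" by (rule mem_is_interval_1_I[OF iv cJ dJ]) (use x in auto)
  qed
  have gd: "graph_dist X a b = integral {c..d} (\<lambda>s. sqrt (1 + (deriv X s)\<^sup>2))"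
    unfolding graph_dist_def c_def d_def by simp
  have ab: "\<bar>a - b\<bar> = d - c" unfolding c_def d_def by auto
  show ?thesis
  proof (cases "c = d")
    case True
    then have "graph_dist X a b = 0" unfolding gd by simp
    moreover have "\<bar>a - b\<bar> = 0" using ab True by simp
    ultimately show ?thesis by simp
  next
    case False
    then have cd: "c < d" unfolding c_def d_def by auto
    define h where "h s = sqrt (1 + (X' s)\<^sup>2)" for s
    have hc: "continuous_on {c..d} h" unfolding h_def
      by (intro continuous_intros continuous_on_subset[OF cont cdJ])
    then obtain I where hI: "(h has_integral I) {c..d}"
      using integrable_continuous_interval by blast
    have eq: "sqrt (1 + (deriv X s)\<^sup>2) = h s" if "s \<in> {c..d} - {c, d}" for s
    proof -
      have s: "s \<in> {c<..<d}" using that by auto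
      have "(X has_real_derivative X' s) (at s within {c<..<d})"
      proof -
        have sub: "{c<..<d} \<subseteq> J" using cdJ by auto
        have "(X has_real_derivative X' s) (at s within J)" using der sub s by blast
        then show ?thesis by (rule DERIV_subset[OF _ sub])
      qed
      then have "(X has_real_derivative X' s) (at s)"
        using at_within_open[OF s] by simp
      then show ?thesis unfolding h_def by (simp add: DERIV_imp_deriv)
    qed
    have hI2: "((\<lambda>s. sqrt (1 + (deriv X s)\<^sup>2)) has_integral I) {c..d}"
    proof (rule has_integral_spike_finite[of "{c, d}"])
      show "finite {c, d}" by simp
      show "(h has_integral I) {c..d}" by (rule hI)
      fix s assume "s \<in> {c..d} - {c, d}"
      then show "sqrt (1 + (deriv X s)\<^sup>2) = h s" by (rule eq)
    qed
    have 1: "((\<lambda>s. 1) has_integral (d - c)) {c..d}"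
      using has_integral_const_real[of "1::real" c d] cd by simp
    have 2: "((\<lambda>s. sqrt (1 + t^2)) has_integral (d - c) * sqrt (1 + t^2)) {c..d}"
      using has_integral_const_real[of "sqrt (1 + t^2)" c d] cd by simp
    have "d - c \<le> I"
      by (rule has_integral_le[OF 1 hI]) (simp add: h_def)
    moreover have "I \<le> (d - c) * sqrt (1 + t^2)"
    proof (rule has_integral_le[OF hI 2])
      fix s assume "s \<in> {c..d}"
      then have "\<bar>X' s\<bar> \<le> t" using bd cdJ by auto
      from power_mono[OF this, of 2] have "(X' s)^2 \<le> t^2" by simp
      then show "h s \<le> sqrt (1 + t^2)" unfolding h_def by simp
    qed
    moreover have "graph_dist X a b = I" unfolding gd by (rule integral_unique[OF hI2])
    ultimately show ?thesis unfolding ab by (simp add: mult.commute)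
  qed
qed

lemma iter_deriv:
  assumes G: "expanding_circle_lift G"
  shows "\<exists>D. ((G ^^ k) has_real_derivative D) (at x) \<and> \<bar>D\<bar> \<ge> 1"
proof (induction k arbitrary: x)
  case 0
  then show ?case by (auto intro!: exI[of _ 1] DERIV_ident simp: id_def)
next
  case (Suc k)
  from G obtain lam where lam: "lam > 1" "\<forall>t. \<bar>deriv G t\<bar> \<ge> lam" and sm: "smooth_real G"
    unfolding expanding_circle_lift_def by blast
  have Gd: "G differentiable (at y)" for y
  proof -
    have "((deriv ^^ 0) G) differentiable (at y)" using sm unfolding smooth_real_def by blast
    then show ?thesis by simp
  qed
  then have GD: "(G has_real_derivative deriv G y) (at y)" for y
    using DERIV_deriv_iff_real_differentiable by blast
  obtain D where D: "((G ^^ k) has_real_derivative D) (at x)" "\<bar>D\<bar> \<ge> 1" using Suc by blast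
  have "((G \<circ> (G ^^ k)) has_real_derivative deriv G ((G ^^ k) x) * D) (at x)"
    by (rule DERIV_chain[OF GD D(1)])
  moreover have "\<bar>deriv G ((G ^^ k) x) * D\<bar> \<ge> 1"
  proof -
    have "\<bar>deriv G ((G ^^ k) x)\<bar> \<ge> 1" using lam by (meson less_imp_le order.trans)
    from mult_mono[OF this D(2)] show ?thesis by (simp add: abs_mult)
  qed
  ultimately show ?case unfolding o_def by auto
qed

lemma aux:
  fixes D g C L h :: real
  assumes "D \<ge> 1" "g \<le> C * L" "L * D \<le> h" "C \<ge> 0"
  shows "g \<le> C * D powr (-1) * h"
proof -
  have pw: "D powr (-1) = 1 / D" using assms(1) by (simp add: powr_minus_divide)
  have "C * L = C * (1 / D) * (L * D)" using assms(1) by simp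
  also have "\<dots> \<le> C * (1 / D) * h"
    using assms by (intro mult_left_mono) auto
  finally show ?thesis using assms(2) pw by simp
qed

theorem proposition6p3:
  fixes G :: "real \<Rightarrow> real" and f :: "real \<times> real \<Rightarrow> real"
    and a0 b0 \<alpha> C1 :: real
  assumes I0: "a0 < b0"
    and G: "expanding_circle_lift G"
    and f_C3: "Ck 3 f"
    and f_per: "\<forall>t x. f (t + 1, x) = f (t, x)"
    and f_maps: "\<forall>t x. x \<in> {a0..b0} \<longrightarrow> f (t, x) \<in> {a0..b0}"
    and PH: "partially_hyperbolic G f {a0..b0}"
    and alpha: "\<alpha> > 0"
    and C1_pos: "C1 > 0"
    and C1: "\<forall>n J X. tcurve {a0..b0} \<alpha> J X \<longrightarrow> image_is_graph G n J \<longrightarrow>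
               (\<exists>Y. represents_image G f n J X Y \<and> tcurve {a0..b0} C1 ((G ^^ n) ` J) Y)"
  shows "\<exists>C2>0. \<forall>k J X Xk a b.
           tcurve {a0..b0} C1 J X \<longrightarrow> image_is_graph G k J \<longrightarrow>
           represents_image G f k J X Xk \<longrightarrow> tcurve {a0..b0} C1 ((G ^^ k) ` J) Xk \<longrightarrow>
           a \<in> J \<longrightarrow> b \<in> J \<longrightarrow>
           (\<exists>\<theta>k\<in>J. graph_dist X a b
                     \<le> C2 * \<bar>deriv (G ^^ k) \<theta>k\<bar> powr (-1) * graph_dist Xk ((G ^^ k) a) ((G ^^ k) b))"
proof (intro exI[of _ "sqrt (1 + C1^2)"] conjI allI impI)
  show "sqrt (1 + C1^2) > 0" by (simp add: add_pos_nonneg)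
  fix k J X Xk a b
  assume tX: "tcurve {a0..b0} C1 J X" and tY: "tcurve {a0..b0} C1 ((G ^^ k) ` J) Xk"
    and a: "a \<in> J" and b: "b \<in> J"
  let ?C = "sqrt (1 + C1^2)"
  have hX: "\<bar>a - b\<bar> \<le> graph_dist X a b \<and> graph_dist X a b \<le> ?C * \<bar>a - b\<bar>"
    by (rule gd_bounds[OF tX a b])
  have hY: "\<bar>(G ^^ k) a - (G ^^ k) b\<bar> \<le> graph_dist Xk ((G ^^ k) a) ((G ^^ k) b)"
    using conjunct1[OF gd_bounds[OF tY imageI[OF a] imageI[OF b]]] .
  have Dk: "((G ^^ k) has_real_derivative deriv (G ^^ k) x) (at x) \<and> \<bar>deriv (G ^^ k) x\<bar> \<ge> 1" for x
  proof -
    obtain D where D: "((G ^^ k) has_real_derivative D) (at x)" "\<bar>D\<bar> \<ge> 1"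
      using iter_deriv[OF G, of k x] by blast
    have "deriv (G ^^ k) x = D" by (rule DERIV_imp_deriv[OF D(1)])
    then show ?thesis using D by simp
  qed
  show "\<exists>\<theta>k\<in>J. graph_dist X a b
          \<le> ?C * \<bar>deriv (G ^^ k) \<theta>k\<bar> powr (-1) * graph_dist Xk ((G ^^ k) a) ((G ^^ k) b)"
  proof (cases "a = b")
    case True
    have "graph_dist X a b \<le> ?C * \<bar>a - b\<bar>" by (rule conjunct2[OF hX])
    then have "graph_dist X a b \<le> 0" unfolding True by (simp only: diff_self abs_zero mult_zero_right)
    moreover have "0 \<le> ?C * \<bar>deriv (G ^^ k) a\<bar> powr (-1) * graph_dist Xk ((G ^^ k) a) ((G ^^ k) b)"
    proof -
      have "0 \<le> graph_dist Xk ((G ^^ k) a) ((G ^^ k) b)" using hY by (rule order.trans[OF abs_ge_zero])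
      moreover have "0 \<le> ?C" by (rule real_sqrt_ge_zero) (simp add: add_nonneg_nonneg)
      ultimately show ?thesis by (intro mult_nonneg_nonneg powr_ge_zero)
    qed
    ultimately have ineq: "graph_dist X a b \<le> ?C * \<bar>deriv (G ^^ k) a\<bar> powr (-1) * graph_dist Xk ((G ^^ k) a) ((G ^^ k) b)"
      by (rule order.trans)
    show ?thesis
    proof (rule bexI[OF _ a])
      show "graph_dist X a b \<le> ?C * \<bar>deriv (G ^^ k) a\<bar> powr (-1) * graph_dist Xk ((G ^^ k) a) ((G ^^ k) b)"
        by (rule ineq)
    qed
  next
    case False
    define c where "c = min a b"
    define d where "d = max a b"
    have cd: "c < d" using False unfolding c_def d_def by auto
    obtain z where z: "c < z" "z < d" "(G ^^ k) d - (G ^^ k) c = (d - c) * deriv (G ^^ k) z"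
    proof -
      have "\<exists>z>c. z < d \<and> (G ^^ k) d - (G ^^ k) c = (d - c) * deriv (G ^^ k) z"
        by (rule MVT2[OF cd]) (rule conjunct1[OF Dk])
      then show ?thesis using that by blast
    qed
    have zJ: "z \<in> J"
    proof -
      have iv: "is_interval J" using tX unfolding tcurve_def by blast
      have cJ: "c \<in> J" using a b unfolding c_def min_def by simp
      have dJ: "d \<in> J" using a b unfolding d_def max_def by simp
      show ?thesis by (rule mem_is_interval_1_I[OF iv cJ dJ]) (use z in linarith)+
    qed
    let ?D = "\<bar>deriv (G ^^ k) z\<bar>"
    have D1: "?D \<ge> 1" using Dk by blast
    have e1: "\<bar>a - b\<bar> = d - c" unfolding c_def d_def by auto
    have e2: "\<bar>(G ^^ k) a - (G ^^ k) b\<bar> = (d - c) * ?D"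
    proof -
      have "\<bar>(G ^^ k) a - (G ^^ k) b\<bar> = \<bar>(G ^^ k) d - (G ^^ k) c\<bar>"
        unfolding c_def d_def by (cases "a \<le> b") auto
      also have "\<dots> = (d - c) * ?D" using z cd by (simp add: abs_mult)
      finally show ?thesis .
    qed
    have ineq: "graph_dist X a b \<le> ?C * ?D powr (-1) * graph_dist Xk ((G ^^ k) a) ((G ^^ k) b)"
    proof (rule aux[OF D1])
      show "graph_dist X a b \<le> ?C * (d - c)" using conjunct2[OF hX] unfolding e1 .
      show "(d - c) * ?D \<le> graph_dist Xk ((G ^^ k) a) ((G ^^ k) b)" using hY unfolding e2 .
      show "0 \<le> ?C" by (rule real_sqrt_ge_zero) (simp add: add_nonneg_nonneg)
    qed
    show ?thesis
    proof (rule bexI[OF _ zJ])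
      show "graph_dist X a b \<le> ?C * \<bar>deriv (G ^^ k) z\<bar> powr (-1) * graph_dist Xk ((G ^^ k) a) ((G ^^ k) b)"
        by (rule ineq)
    qed
  qed
qed

end
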